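(* Let $M$ be a multiplication $L$-module and define $\delta_2:M\to M$ by $\delta_2(A)=\bigwedge\{H\in M: A\leqslant H,\ H\text{ maximal in }M\}$ for proper $A\in M$ and $\delta_2(I_M)=I_M$. Then $\delta_2(A\wedge B)=\delta_2(A)\wedge\delta_2(B)$ for all $A,B\in M$.
   Context: $L$ is a multiplicative lattice (complete lattice with commutative, associative, join-distributive multiplication with identity $1$), compactly generated, $1$ compact, finite products of compact elements compact. An $L$-module is a complete lattice $M$ (least $O_M$, greatest $I_M$) with product $aB\in M$ satisfying $(\bigvee a_\alpha)A=\bigvee(a_\alpha A)$, $a(\bigvee A_\alpha)=\bigvee(aA_\alpha)$, $(ab)A=a(bA)$, $1A=A$, $0A=O_M$. $M$ is a multiplication module if every $N\in M$ equals $aI_M$ for some $a\in L$. Proper means $<I_M$; a proper $N$ is maximal if $N\leqslant B$ implies $B=N$ or $B=I_M$. The meet of the empty family is $I_M$. *)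

theory Defs
  imports Main
begin

definition compact_elem :: "'a::complete_lattice \<Rightarrow> bool" where
  "compact_elem c \<longleftrightarrow>
     (\<forall>S. c \<le> Sup S \<longrightarrow> (\<exists>F. finite F \<and> F \<subseteq> S \<and> c \<le> Sup F))"

definition multiplicative_lattice :: "('a::complete_lattice \<Rightarrow> 'a \<Rightarrow> 'a) \<Rightarrow> bool" where
  "multiplicative_lattice mult \<longleftrightarrow>
     (\<forall>a b. mult a b = mult b a) \<and>
     (\<forall>a b c. mult (mult a b) c = mult a (mult b c)) \<and>
     (\<forall>a S. mult a (Sup S) = Sup ((\<lambda>s. mult a s) ` S)) \<and>
     (\<forall>a. mult top a = a) \<and>
     (\<forall>x::'a. \<exists>C. (\<forall>c\<in>C. compact_elem c) \<and> x = Sup C) \<and>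
     compact_elem (top :: 'a) \<and>
     (\<forall>a b. compact_elem a \<longrightarrow> compact_elem b \<longrightarrow> compact_elem (mult a b))"

definition L_module ::
  "('a::complete_lattice \<Rightarrow> 'a \<Rightarrow> 'a) \<Rightarrow> ('a \<Rightarrow> 'm::complete_lattice \<Rightarrow> 'm) \<Rightarrow> bool" where
  "L_module mult act \<longleftrightarrow>
     (\<forall>S A. act (Sup S) A = Sup ((\<lambda>a. act a A) ` S)) \<and>
     (\<forall>a T. act a (Sup T) = Sup ((\<lambda>A. act a A) ` T)) \<and>
     (\<forall>a b A. act (mult a b) A = act a (act b A)) \<and>
     (\<forall>A. act top A = A) \<and>
     (\<forall>A. act bot A = bot)"

definition multiplication_module :: "('a \<Rightarrow> 'm::complete_lattice \<Rightarrow> 'm) \<Rightarrow> bool" where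
  "multiplication_module act \<longleftrightarrow> (\<forall>N. \<exists>a. N = act a top)"

definition maximal_elem :: "'m::complete_lattice \<Rightarrow> bool" where
  "maximal_elem N \<longleftrightarrow> N < top \<and> (\<forall>B. N \<le> B \<longrightarrow> B = N \<or> B = top)"

definition delta2 :: "'m::complete_lattice \<Rightarrow> 'm" where
  "delta2 A = (if A = top then top else Inf {H. A \<le> H \<and> maximal_elem H})"

end

theory Submission
  imports Defs
begin

lemma maximal_prime:
  fixes mult :: "'a::complete_lattice \<Rightarrow> 'a \<Rightarrow> 'a"
    and act :: "'a \<Rightarrow> 'm::complete_lattice \<Rightarrow> 'm" and A B H :: 'm
  assumes Hml: "multiplicative_lattice mult"
    and Hlm: "L_module mult act"
    and Hmm: "multiplication_module act"
    and H: "maximal_elem H" and AB: "inf A B \<le> H"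
  shows "A \<le> H \<or> B \<le> H"
proof (rule ccontr)
  assume na: "\<not> (A \<le> H \<or> B \<le> H)"
  have comm: "\<And>a b. mult a b = mult b a" using Hml unfolding multiplicative_lattice_def by blast
  have sup1: "\<And>a b X. act (sup a b) X = sup (act a X) (act b X)"
  proof -
    fix a b X
    have "act (Sup {a,b}) X = Sup ((\<lambda>a. act a X) ` {a,b})" using Hlm unfolding L_module_def by blast
    thus "act (sup a b) X = sup (act a X) (act b X)" by simp
  qed
  have sup2: "\<And>a X Y. act a (sup X Y) = sup (act a X) (act a Y)"
  proof -
    fix a X Y
    have "act a (Sup {X,Y}) = Sup ((\<lambda>X. act a X) ` {X,Y})" using Hlm unfolding L_module_def by blast
    thus "act a (sup X Y) = sup (act a X) (act a Y)" by simp
  qed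
  have assoc: "\<And>a b X. act (mult a b) X = act a (act b X)" using Hlm unfolding L_module_def by blast
  have one: "\<And>X. act top X = X" using Hlm unfolding L_module_def by blast
  have mono1: "\<And>a X. act a X \<le> X"
  proof -
    fix a X
    have "act top X = sup (act a X) (act top X)" using sup1[of a top X] by (simp add: sup_absorb2)
    thus "act a X \<le> X" using one by (metis sup.orderI sup_commute)
  qed
  have mono2: "\<And>a X Y. X \<le> Y \<Longrightarrow> act a X \<le> act a Y"
  proof -
    fix a X Y assume "X \<le> (Y::'m)"
    hence "act a Y = sup (act a X) (act a Y)" using sup2[of a X Y] by (simp add: sup_absorb2)
    thus "act a X \<le> act a Y" by (metis sup.cobounded1)
  qed
  obtain a where a: "A = act a top" using Hmm unfolding multiplication_module_def by blast
  obtain b where b: "B = act b top" using Hmm unfolding multiplication_module_def by blast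
  have "H \<le> sup H A" by simp
  hence "sup H A = H \<or> sup H A = top" using H unfolding maximal_elem_def by blast
  moreover have "sup H A \<noteq> H" using na by (metis sup.cobounded2)
  ultimately have top: "sup H A = top" by blast
  have "act b (act a top) \<le> act b top" by (rule mono2) simp
  moreover have "act b (act a top) \<le> act a top"
    by (metis assoc comm mono1 mono2 top_greatest)
  ultimately have "act b (act a top) \<le> H" using AB a b by (meson inf_greatest order_trans)
  moreover have "act b H \<le> H" by (rule mono1)
  ultimately have "act b (sup H A) \<le> H" unfolding sup2 a by simp
  hence "act b top \<le> H" by (simp only: top)
  hence "B \<le> H" by (simp only: b)
  with na show False by (rule notE[OF _ disjI2])
qed

lemma delta2_alt: "delta2 A = Inf {H. A \<le> H \<and> maximal_elem H}"
  by (cases "A = top") (auto simp: delta2_def maximal_elem_def top_le)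

theorem theorem3p7:
  fixes mult :: "'a::complete_lattice \<Rightarrow> 'a \<Rightarrow> 'a"
    and act :: "'a \<Rightarrow> 'm::complete_lattice \<Rightarrow> 'm"
  assumes "multiplicative_lattice mult"
    and "L_module mult act"
    and "multiplication_module act"
  shows "\<forall>A B::'m. delta2 (inf A B) = inf (delta2 A) (delta2 B)"
proof (intro allI antisym)
  fix A B :: 'm
  have s1: "{H. A \<le> H \<and> maximal_elem H} \<subseteq> {H. inf A B \<le> H \<and> maximal_elem H}"
    using le_infI1 by blast
  have s2: "{H. B \<le> H \<and> maximal_elem H} \<subseteq> {H. inf A B \<le> H \<and> maximal_elem H}"
    using le_infI2 by blast
  show "delta2 (inf A B) \<le> inf (delta2 A) (delta2 B)"
    unfolding delta2_alt using Inf_superset_mono[OF s1] Inf_superset_mono[OF s2]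
    by (rule inf_greatest)
  show "inf (delta2 A) (delta2 B) \<le> delta2 (inf A B)"
    unfolding delta2_alt
  proof (rule Inf_greatest)
    fix H assume "H \<in> {H. inf A B \<le> H \<and> maximal_elem H}"
    hence H: "maximal_elem H" "inf A B \<le> H" by auto
    have "A \<le> H \<or> B \<le> H" by (rule maximal_prime[OF assms H])
    thus "inf (Inf {H. A \<le> H \<and> maximal_elem H}) (Inf {H. B \<le> H \<and> maximal_elem H}) \<le> H"
    proof
      assume "A \<le> H"
      hence "H \<in> {H. A \<le> H \<and> maximal_elem H}" using H(1) by simp
      hence "Inf {H. A \<le> H \<and> maximal_elem H} \<le> H" by (rule Inf_lower)
      thus ?thesis by (rule le_infI1)
    next
      assume "B \<le> H"
      hence "H \<in> {H. B \<le> H \<and> maximal_elem H}" using H(1) by simp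
      hence "Inf {H. B \<le> H \<and> maximal_elem H} \<le> H" by (rule Inf_lower)
      thus ?thesis by (rule le_infI2)
    qed
  qed
qed

end
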